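(* Let $p(0,N):=\frac{1}{2+a\varphi_N}$, $k(N):=\lfloor N/\sqrt{\log N}\rfloor$, and for $w\in\mathbb W$ let $S(w):=\max_{0\le n\le\tau_0(w)}w(n)$. Then, in $\mathbb P^{p(0,N)}_{k(N)}$-probability as $N\to\infty$, $$\max_{0\le n<\sigma_{S(W)}(W)}\big(\log_N S(W)-\log_N W(n)\big)\to0$$ and $$\max_{S(W)\ge k>0}\ \max_{\sigma_k(W)\le n<\sigma_{k-1}(W)}\big(\log_N k-\log_N W(n)\big)\to0.$$
   Context: $a>0$ and $0<\varphi_N\le1$. Let $\mathbb W$ be the set of integer sequences $w=(w(0),w(1),\dots)$ with $w(n+1)-w(n)\in\{-1,1\}$. For $p\in(0,1)$ and $k\in\mathbb Z$, $\mathbb P_k^p$ is the law on $\mathbb W$ of the simple random walk $W$ with $W(0)=k$ stepping $+1$ with probability $p$ and $-1$ with probability $1-p$. For $k\in\mathbb N_0$, $\tau_k(w):=\min\{n\in\mathbb N_0: w(n)=k\}$, and $\sigma_k(w):=\max\{n\in\mathbb N_0: w(n)=k,\ w(j)\ge1\text{ for all }j\in\{0,\dots,n-1\}\}$ is the time of the last visit of $k$ before $w$ hits $0$ (so $\sigma_0=\tau_0$). $\log_N x=\log x/\log N$. *)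

theory Defs
  imports "HOL-Probability.Probability"
begin

definition step_space :: "real \<Rightarrow> (nat \<Rightarrow> bool) measure" where
  "step_space p = PiM UNIV (\<lambda>_. measure_pmf (bernoulli_pmf p))"

definition walk_of :: "int \<Rightarrow> (nat \<Rightarrow> bool) \<Rightarrow> nat \<Rightarrow> int" where
  "walk_of k \<xi> n = k + (\<Sum>i<n. if \<xi> i then 1 else -1)"

definition rw_law :: "real \<Rightarrow> int \<Rightarrow> (nat \<Rightarrow> int) measure" where
  "rw_law p k = distr (step_space p) (PiM UNIV (\<lambda>_. count_space UNIV)) (walk_of k)"

definition tau :: "int \<Rightarrow> (nat \<Rightarrow> int) \<Rightarrow> nat" where
  "tau k w = (LEAST n. w n = k)"

definition sigma :: "int \<Rightarrow> (nat \<Rightarrow> int) \<Rightarrow> nat" where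
  "sigma k w = (GREATEST n. w n = k \<and> (\<forall>j<n. w j \<ge> 1))"

definition Smax :: "(nat \<Rightarrow> int) \<Rightarrow> int" where
  "Smax w = Max {w n | n. n \<le> tau 0 w}"

definition logN :: "nat \<Rightarrow> real \<Rightarrow> real" where
  "logN N x = ln x / ln (real N)"

definition p0N :: "real \<Rightarrow> (nat \<Rightarrow> real) \<Rightarrow> nat \<Rightarrow> real" where
  "p0N a \<phi> N = 1 / (2 + a * \<phi> N)"

definition kN :: "nat \<Rightarrow> int" where
  "kN N = \<lfloor>real N / sqrt (ln (real N))\<rfloor>"

end

theory Submission
  imports Defs
begin


lemma fin_dep_sets:
  fixes P :: "(nat \<Rightarrow> 'a::countable) \<Rightarrow> bool"
  assumes "\<And>w w'. (\<forall>i\<le>T. w i = w' i) \<Longrightarrow> P w \<Longrightarrow> P w'"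
  shows "{w. P w} \<in> sets (PiM UNIV (\<lambda>_. count_space (UNIV::'a set)))"
proof -
  define V where "V = (\<lambda>w. restrict w {..T}) ` {w. P w}"
  have cV: "countable V"
  proof (rule countable_subset)
    show "V \<subseteq> PiE {..T} (\<lambda>_. UNIV::'a set)" unfolding V_def by (intro image_subsetI) (simp add: restrict_PiE_iff)
    show "countable (PiE {..T} (\<lambda>_. UNIV::'a set))" by (rule countable_PiE) auto
  qed
  have eq: "{w. P w} = {w. \<exists>v\<in>V. \<forall>i. i \<le> T \<longrightarrow> w i = v i}"
  proof (intro set_eqI iffI)
    fix w assume "w \<in> {w. P w}" then show "w \<in> {w. \<exists>v\<in>V. \<forall>i. i \<le> T \<longrightarrow> w i = v i}"
      unfolding V_def by (intro CollectI bexI[of _ "restrict w {..T}"]) auto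
  next
    fix w assume "w \<in> {w. \<exists>v\<in>V. \<forall>i. i \<le> T \<longrightarrow> w i = v i}"
    then obtain u where "P u" "\<forall>i. i \<le> T \<longrightarrow> w i = restrict u {..T} i" unfolding V_def by auto
    then show "w \<in> {w. P w}" using assms[of u w] by auto
  qed
  have "Measurable.pred (PiM UNIV (\<lambda>_. count_space (UNIV::'a set))) (\<lambda>w. \<exists>v\<in>V. \<forall>i. i \<le> T \<longrightarrow> w i = v i)"
    using cV by measurable
  then show ?thesis unfolding eq by (simp add: pred_def space_PiM)
qed

lemma sets_step_space: "sets (step_space p) = sets (PiM UNIV (\<lambda>_. count_space (UNIV::bool set)))"
  unfolding step_space_def by (rule sets_PiM_cong) (auto simp: sets_measure_pmf_count_space)

lemma prob_step: "prob_space (step_space p)"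
  unfolding step_space_def
  by (intro prob_space_PiM prob_space_measure_pmf)

lemma space_step[simp]: "space (step_space p) = UNIV"
  unfolding step_space_def by (simp add: space_PiM)

lemma step_rec:
  assumes p: "0 \<le> p" "p \<le> 1"
  and F: "\<And>b. {\<xi>. F b \<xi>} \<in> sets (step_space p)"
  shows "measure (step_space p) {\<xi>. F (\<xi> 0) (\<lambda>n. \<xi> (Suc n))}
     = p * measure (step_space p) {\<xi>. F True \<xi>} + (1-p) * measure (step_space p) {\<xi>. F False \<xi>}"
proof -
  define M where "M = measure_pmf (bernoulli_pmf p)"
  interpret sequence_space M
    unfolding sequence_space_def product_prob_space_def product_sigma_finite_def product_prob_space_axioms_def M_def
    by (auto simp: prob_space_measure_pmf prob_space_imp_sigma_finite)
  have Sdef: "step_space p = S" by (simp add: step_space_def M_def)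
  have spM: "space M = UNIV" by (simp add: M_def)
  have spS: "space S = UNIV" by (simp add: space_PiM spM)
  have sM: "sets M = sets (count_space UNIV)" by (simp add: M_def)
  have FS: "\<And>b. {\<xi>. F b \<xi>} \<in> sets S" using F Sdef by simp
  define f where "f = (\<lambda>(s::bool, \<omega>::nat \<Rightarrow> bool). case_nat s \<omega>)"
  have fm: "f \<in> measurable (M \<Otimes>\<^sub>M S) S"
    unfolding f_def by measurable
  have shm: "(\<lambda>\<xi>::nat\<Rightarrow>bool. \<lambda>n. \<xi> (Suc n)) \<in> measurable S S"
    by (rule measurable_PiM_single') (auto simp: spS spM)
  have c0: "(\<lambda>\<xi>::nat\<Rightarrow>bool. \<xi> 0) \<in> measurable S (count_space UNIV)"
    by (metis (no_types) measurable_component_singleton measurable_cong_sets sM UNIV_I)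
  define A where "A = {\<xi>. F (\<xi> 0) (\<lambda>n. \<xi> (Suc n))}"
  have A_eq: "A = ((\<lambda>\<xi>. \<xi> 0) -` {True} \<inter> (\<lambda>\<xi>. \<lambda>n. \<xi> (Suc n)) -` {\<xi>. F True \<xi>})
     \<union> ((\<lambda>\<xi>. \<xi> 0) -` {False} \<inter> (\<lambda>\<xi>. \<lambda>n. \<xi> (Suc n)) -` {\<xi>. F False \<xi>})"
    unfolding A_def
  proof (rule set_eqI)
    fix x :: "nat \<Rightarrow> bool"
    show "x \<in> {\<xi>. F (\<xi> 0) (\<lambda>n. \<xi> (Suc n))} \<longleftrightarrow> x \<in> ((\<lambda>\<xi>. \<xi> 0) -` {True} \<inter> (\<lambda>\<xi>. \<lambda>n. \<xi> (Suc n)) -` {\<xi>. F True \<xi>})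
     \<union> ((\<lambda>\<xi>. \<xi> 0) -` {False} \<inter> (\<lambda>\<xi>. \<lambda>n. \<xi> (Suc n)) -` {\<xi>. F False \<xi>})"
      by (cases "x 0") auto
  qed
  have AS: "A \<in> sets S"
  proof -
    have "(\<lambda>\<xi>. \<xi> 0) -` {b} \<inter> space S \<in> sets S" for b
      using c0 by (rule measurable_sets) simp
    moreover have "(\<lambda>\<xi>::nat\<Rightarrow>bool. \<lambda>n. \<xi> (Suc n)) -` {\<xi>. F b \<xi>} \<inter> space S \<in> sets S" for b
      using shm FS by (rule measurable_sets)
    ultimately show ?thesis unfolding A_eq using spS by (intro sets.Un sets.Int) auto
  qed
  have "emeasure S A = emeasure (distr (M \<Otimes>\<^sub>M S) S f) A"
    using PiM_iter by (simp add: f_def)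
  also have "\<dots> = emeasure (M \<Otimes>\<^sub>M S) (f -` A \<inter> space (M \<Otimes>\<^sub>M S))"
    using fm AS by (rule emeasure_distr)
  also have "f -` A \<inter> space (M \<Otimes>\<^sub>M S) = {(s, \<omega>). F s \<omega>}"
    unfolding A_def f_def by (auto simp: space_pair_measure spM spS)
  also have "emeasure (M \<Otimes>\<^sub>M S) {(s, \<omega>). F s \<omega>} = (\<integral>\<^sup>+s. emeasure S (Pair s -` {(s, \<omega>). F s \<omega>}) \<partial>M)"
  proof (rule P.emeasure_pair_measure_alt)
    have "f -` A \<inter> space (M \<Otimes>\<^sub>M S) \<in> sets (M \<Otimes>\<^sub>M S)"
      using fm AS by (rule measurable_sets)
    also have "f -` A \<inter> space (M \<Otimes>\<^sub>M S) = {(s, \<omega>). F s \<omega>}"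
      unfolding A_def f_def by (auto simp: space_pair_measure spM spS)
    finally show "{(s, \<omega>). F s \<omega>} \<in> sets (M \<Otimes>\<^sub>M S)" .
  qed
  also have "\<dots> = (\<integral>\<^sup>+s. emeasure S {\<omega>. F s \<omega>} \<partial>measure_pmf (bernoulli_pmf p))"
    by (simp add: M_def)
  also have "\<dots> = (\<Sum>s\<in>UNIV. emeasure S {\<omega>. F s \<omega>} * pmf (bernoulli_pmf p) s)"
    by (rule nn_integral_measure_pmf_support) auto
  also have "\<dots> = ennreal (p * measure S {\<xi>. F True \<xi>} + (1-p) * measure S {\<xi>. F False \<xi>})"
    using p by (simp add: UNIV_bool P.emeasure_eq_measure ennreal_mult' ennreal_plus mult.commute)
  finally have eq: "emeasure S A = ennreal (p * measure S {\<xi>. F True \<xi>} + (1-p) * measure S {\<xi>. F False \<xi>})" .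
  have nn: "0 \<le> p * measure S {\<xi>. F True \<xi>} + (1-p) * measure S {\<xi>. F False \<xi>}"
    using p by (intro add_nonneg_nonneg mult_nonneg_nonneg) auto
  have "measure S A = p * measure S {\<xi>. F True \<xi>} + (1-p) * measure S {\<xi>. F False \<xi>}"
    using eq nn by (metis P.emeasure_eq_measure ennreal_inj measure_nonneg)
  then show ?thesis unfolding Sdef A_def .
qed



definition stp :: "bool \<Rightarrow> int" where "stp b = (if b then 1 else -1)"

lemma walk_0[simp]: "walk_of k \<xi> 0 = k" by (simp add: walk_of_def)

lemma walk_Suc: "walk_of k \<xi> (Suc n) = walk_of (k + stp (\<xi> 0)) (\<lambda>i. \<xi> (Suc i)) n"
  unfolding walk_of_def stp_def sum.lessThan_Suc_shift by simp

lemma walk_step: "walk_of k \<xi> (Suc n) = walk_of k \<xi> n + stp (\<xi> n)"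
  by (simp add: walk_of_def stp_def)

lemma walk_diff: "\<bar>walk_of k \<xi> (Suc n) - walk_of k \<xi> n\<bar> \<le> 1"
  by (simp add: walk_step stp_def)

lemma walk_dep: "(\<forall>j\<le>i. \<xi> j = \<xi>' j) \<Longrightarrow> walk_of k \<xi> i = walk_of k \<xi>' i"
  unfolding walk_of_def by (auto intro!: sum.cong)

fun R :: "int \<Rightarrow> int \<Rightarrow> nat \<Rightarrow> int \<Rightarrow> bool \<Rightarrow> (nat \<Rightarrow> bool) \<Rightarrow> bool" where
  "R h H 0 x s \<xi> = ((s \<or> x \<le> h) \<and> H \<le> x)"
| "R h H (Suc T) x s \<xi> = (((s \<or> x \<le> h) \<and> H \<le> x) \<or>
      (1 \<le> x \<and> R h H T (x + stp (\<xi> 0)) (s \<or> x \<le> h) (\<lambda>n. \<xi> (Suc n))))"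

lemma R_dep: "(\<forall>i\<le>T. \<xi> i = \<xi>' i) \<Longrightarrow> R h H T x s \<xi> \<Longrightarrow> R h H T x s \<xi>'"
proof (induction T arbitrary: x s \<xi> \<xi>')
  case 0 then show ?case by simp
next
  case (Suc T)
  have "\<forall>i\<le>T. (\<lambda>n. \<xi> (Suc n)) i = (\<lambda>n. \<xi>' (Suc n)) i" using Suc.prems(1) by auto
  moreover have "\<xi> 0 = \<xi>' 0" using Suc.prems(1) by auto
  ultimately show ?case using Suc.prems(2) Suc.IH by fastforce
qed

lemma R_mono: "R h H T x s \<xi> \<Longrightarrow> R h H (Suc T) x s \<xi>"
proof (induction T arbitrary: x s \<xi>)
  case 0 then show ?case by simp
next
  case (Suc T)
  from Suc.prems have "((s \<or> x \<le> h) \<and> H \<le> x) \<or> (1 \<le> x \<and> R h H T (x + stp (\<xi> 0)) (s \<or> x \<le> h) (\<lambda>n. \<xi> (Suc n)))"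
    by (simp only: R.simps)
  then show ?case using Suc.IH by (subst R.simps) blast
qed

lemma R_sets: "{\<xi>. R h H T x s \<xi>} \<in> sets (step_space p)"
  unfolding sets_step_space by (rule fin_dep_sets[of T]) (rule R_dep)

fun NH :: "nat \<Rightarrow> int \<Rightarrow> (nat \<Rightarrow> bool) \<Rightarrow> bool" where
  "NH 0 x \<xi> = (1 \<le> x)"
| "NH (Suc T) x \<xi> = (1 \<le> x \<and> NH T (x + stp (\<xi> 0)) (\<lambda>n. \<xi> (Suc n)))"

lemma NH_dep: "(\<forall>i\<le>T. \<xi> i = \<xi>' i) \<Longrightarrow> NH T x \<xi> \<Longrightarrow> NH T x \<xi>'"
proof (induction T arbitrary: x \<xi> \<xi>')
  case 0 then show ?case by simp
next
  case (Suc T)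
  have "\<forall>i\<le>T. (\<lambda>n. \<xi> (Suc n)) i = (\<lambda>n. \<xi>' (Suc n)) i" using Suc.prems(1) by auto
  moreover have "\<xi> 0 = \<xi>' 0" using Suc.prems(1) by auto
  ultimately show ?case using Suc.prems(2) Suc.IH by fastforce
qed

lemma NH_sets: "{\<xi>. NH T x \<xi>} \<in> sets (step_space p)"
  unfolding sets_step_space by (rule fin_dep_sets[of T]) (rule NH_dep)

lemma step_rec_stp:
  assumes "0 \<le> p" "p \<le> 1" "\<And>y s. {\<xi>. Q y \<xi>} \<in> sets (step_space p)"
  shows "measure (step_space p) {\<xi>. Q (x + stp (\<xi> 0)) (\<lambda>n. \<xi> (Suc n))}
     = p * measure (step_space p) {\<xi>. Q (x+1) \<xi>} + (1-p) * measure (step_space p) {\<xi>. Q (x - 1) \<xi>}"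
  using step_rec[of p "\<lambda>b \<xi>. Q (x + stp b) \<xi>"] assms by (simp add: stp_def)

lemma R_bound:
  assumes p: "0 \<le> p" "p \<le> 1/2" and h: "0 \<le> h" and H: "0 < H"
  shows "measure (step_space p) {\<xi>. R h H T x s \<xi>}
     \<le> (if s \<or> x \<le> h then max 0 (real_of_int x) / H else h / H)"
proof (induction T arbitrary: x s)
  interpret prob_space "step_space p" by (rule prob_step)
  case 0
  show ?case
  proof (cases "(s \<or> x \<le> h) \<and> H \<le> x")
    case True
    have "measure (step_space p) {\<xi>. R h H 0 x s \<xi>} \<le> 1" by (rule prob_le_1)
    also have "1 \<le> (if s \<or> x \<le> h then max 0 (real_of_int x) / H else h / H)"
      using True H by (simp add: le_divide_eq_1_pos)
    finally show ?thesis .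
  next
    case False
    then have "{\<xi>. R h H 0 x s \<xi>} = {}" by simp
    then show ?thesis using h H by (simp del: R.simps)
  qed
next
  interpret prob_space "step_space p" by (rule prob_step)
  case (Suc T)
  let ?b = "\<lambda>x s. (if s \<or> x \<le> h then max 0 (real_of_int x) / H else h / H)"
  show ?case
  proof (cases "(s \<or> x \<le> h) \<and> H \<le> x")
    case True
    have "measure (step_space p) {\<xi>. R h H (Suc T) x s \<xi>} \<le> 1" by (rule prob_le_1)
    also have "1 \<le> ?b x s"
      using True H by (simp add: le_divide_eq_1_pos)
    finally show ?thesis .
  next
    case False
    show ?thesis
    proof (cases "1 \<le> x")
      case False2: False
      then have "{\<xi>. R h H (Suc T) x s \<xi>} = {}" using False by simp
      then show ?thesis using h H by (simp del: R.simps)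
    next
      case True
      define s' where "s' = (s \<or> x \<le> h)"
      have eq: "{\<xi>. R h H (Suc T) x s \<xi>} = {\<xi>. R h H T (x + stp (\<xi> 0)) s' (\<lambda>n. \<xi> (Suc n))}"
        using False True by (auto simp: s'_def)
      have "measure (step_space p) {\<xi>. R h H (Suc T) x s \<xi>}
          = p * measure (step_space p) {\<xi>. R h H T (x+1) s' \<xi>} + (1-p) * measure (step_space p) {\<xi>. R h H T (x-1) s' \<xi>}"
        unfolding eq using p by (intro step_rec_stp) (auto simp: R_sets)
      also have "\<dots> \<le> p * ?b (x+1) s' + (1-p) * ?b (x-1) s'"
        using p by (intro add_mono mult_left_mono Suc.IH) auto
      also have "\<dots> \<le> ?b x s"
      proof (cases s')
        case True
        have b1: "?b (x+1) s' = (x+1) / H" using True \<open>1 \<le> x\<close> by simp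
        have b2: "?b (x-1) s' = (x-1) / H" using True \<open>1 \<le> x\<close> by simp
        have b3: "?b x s = x / H" using True \<open>1 \<le> x\<close> by (simp add: s'_def)
        have Hne: "real_of_int H \<noteq> 0" using H by simp
        have "p * ((x+1) / H) + (1-p) * ((x-1) / H) = (p * (x+1) + (1-p) * (x-1)) / H"
          using Hne by (simp add: field_simps)
        also have "\<dots> \<le> x / H" using p H by (intro divide_right_mono) (auto simp: algebra_simps)
        finally show ?thesis unfolding b1 b2 b3 .
      next
        case False
        then have nx: "\<not> s" "h < x" by (auto simp: s'_def)
        have "?b (x-1) s' \<le> h / H" using False nx H h by (auto intro!: divide_right_mono)
        moreover have "?b (x+1) s' = h / H" using False nx by (simp add: s'_def)
        ultimately have "p * ?b (x+1) s' + (1-p) * ?b (x-1) s' \<le> p * (h/H) + (1-p) * (h/H)"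
          using p by (intro add_mono mult_left_mono) auto
        also have "\<dots> = h / H" using H by (simp add: field_simps)
        finally show ?thesis using nx by simp
      qed
      finally show ?thesis .
    qed
  qed
qed

lemma R_path:
  "(s \<or> (\<exists>n\<le>m. walk_of x \<xi> n \<le> h)) \<Longrightarrow> H \<le> walk_of x \<xi> m \<Longrightarrow> (\<forall>i<m. 1 \<le> walk_of x \<xi> i)
   \<Longrightarrow> R h H m x s \<xi>"
proof (induction m arbitrary: x s \<xi>)
  case 0 then show ?case by auto
next
  case (Suc m)
  show ?case
  proof (cases "(s \<or> x \<le> h) \<and> H \<le> x")
    case True then show ?thesis by simp
  next
    case False
    define x' where "x' = x + stp (\<xi> 0)"
    define \<xi>' where "\<xi>' = (\<lambda>n. \<xi> (Suc n))"
    have W: "\<And>n. walk_of x \<xi> (Suc n) = walk_of x' \<xi>' n" unfolding x'_def \<xi>'_def by (rule walk_Suc)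
    have x1: "1 \<le> x" using Suc.prems(3) by (metis walk_0 zero_less_Suc)
    have "(s \<or> x \<le> h) \<or> (\<exists>n\<le>m. walk_of x' \<xi>' n \<le> h)"
    proof (cases s)
      case False
      then obtain n where n: "n \<le> Suc m" "walk_of x \<xi> n \<le> h" using Suc.prems(1) by auto
      show ?thesis
      proof (cases n)
        case 0 then show ?thesis using n by simp
      next
        case (Suc n') then show ?thesis using n W by auto
      qed
    qed simp
    moreover have "H \<le> walk_of x' \<xi>' m" using Suc.prems(2) W by simp
    moreover have "\<forall>i<m. 1 \<le> walk_of x' \<xi>' i" using Suc.prems(3) W by (metis Suc_less_eq)
    ultimately have "R h H m x' (s \<or> x \<le> h) \<xi>'" by (rule Suc.IH)
    then show ?thesis using x1 unfolding x'_def \<xi>'_def by simp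
  qed
qed

lemma NH_path: "(\<forall>i\<le>T. 1 \<le> walk_of x \<xi> i) \<Longrightarrow> NH T x \<xi>"
proof (induction T arbitrary: x \<xi>)
  case 0 then show ?case by (metis NH.simps(1) le_refl walk_0)
next
  case (Suc T)
  have x1: "1 \<le> x" using Suc.prems by (metis walk_0 le0)
  have "\<forall>i\<le>T. 1 \<le> walk_of (x + stp (\<xi> 0)) (\<lambda>n. \<xi> (Suc n)) i"
    using Suc.prems by (metis Suc_le_mono walk_Suc)
  then show ?case using x1 Suc.IH by simp
qed

lemma R_inf_sets: "{\<xi>. \<exists>T. R h H T x s \<xi>} \<in> sets (step_space p)"
proof -
  have "{\<xi>. \<exists>T. R h H T x s \<xi>} = (\<Union>T. {\<xi>. R h H T x s \<xi>})" by auto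
  then show ?thesis using R_sets by auto
qed

lemma R_inf_bound:
  assumes p: "0 \<le> p" "p \<le> 1/2" and h: "0 \<le> h" and H: "0 < H"
  shows "measure (step_space p) {\<xi>. \<exists>T. R h H T x s \<xi>}
     \<le> (if s \<or> x \<le> h then max 0 (real_of_int x) / H else h / H)"
proof -
  interpret prob_space "step_space p" by (rule prob_step)
  define A where "A = (\<lambda>T. {\<xi>. R h H T x s \<xi>})"
  have eq: "{\<xi>. \<exists>T. R h H T x s \<xi>} = (\<Union>T. A T)" by (auto simp: A_def)
  have "(\<lambda>T. measure (step_space p) (A T)) \<longlonglongrightarrow> measure (step_space p) (\<Union>T. A T)"
  proof (rule finite_Lim_measure_incseq)
    show "range A \<subseteq> sets (step_space p)" using R_sets by (auto simp: A_def)
    show "incseq A" by (rule incseq_SucI) (auto simp: A_def intro: R_mono)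
  qed
  moreover have "\<And>T. measure (step_space p) (A T) \<le> (if s \<or> x \<le> h then max 0 (real_of_int x) / H else h / H)"
    unfolding A_def using assms by (rule R_bound)
  ultimately show ?thesis unfolding eq by (intro LIMSEQ_le_const2) auto
qed

lemma NH_bound:
  assumes p: "0 < p" "p \<le> 1/2"
  shows "measure (step_space p) {\<xi>. NH T x \<xi>}
     \<le> (sqrt (1-p) / sqrt p) powr (real_of_int x) * (2 * sqrt p * sqrt (1-p)) ^ T"
proof (induction T arbitrary: x)
  interpret prob_space "step_space p" by (rule prob_step)
  case 0
  have lam: "1 \<le> sqrt (1-p) / sqrt p" using p by (simp add: le_divide_eq_1_pos)
  show ?case
  proof (cases "1 \<le> x")
    case True
    have "measure (step_space p) {\<xi>. NH 0 x \<xi>} \<le> 1" by (rule prob_le_1)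
    also have "1 \<le> (sqrt (1-p) / sqrt p) powr (real_of_int x)"
      using lam True by (intro ge_one_powr_ge_zero) auto
    finally show ?thesis by simp
  next
    case False
    then have "{\<xi>. NH 0 x \<xi>} = {}" by simp
    then show ?thesis by (simp del: NH.simps)
  qed
next
  interpret prob_space "step_space p" by (rule prob_step)
  case (Suc T)
  define lam where "lam = sqrt (1-p) / sqrt p"
  define rho where "rho = 2 * sqrt p * sqrt (1-p)"
  have lam0: "0 < lam" using p by (simp add: lam_def)
  show ?case
  proof (cases "1 \<le> x")
    case False
    then have "{\<xi>. NH (Suc T) x \<xi>} = {}" by simp
    moreover have "0 \<le> (sqrt (1-p) / sqrt p) powr (real_of_int x) * (2 * sqrt p * sqrt (1-p)) ^ Suc T"
      using p by (intro mult_nonneg_nonneg zero_le_power) auto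
    ultimately show ?thesis by (simp del: NH.simps)
  next
    case True
    have eq: "{\<xi>. NH (Suc T) x \<xi>} = {\<xi>. NH T (x + stp (\<xi> 0)) (\<lambda>n. \<xi> (Suc n))}"
      using True by auto
    have "measure (step_space p) {\<xi>. NH (Suc T) x \<xi>}
        = p * measure (step_space p) {\<xi>. NH T (x+1) \<xi>} + (1-p) * measure (step_space p) {\<xi>. NH T (x-1) \<xi>}"
      unfolding eq using p by (intro step_rec_stp) (auto simp: NH_sets)
    also have "\<dots> \<le> p * (lam powr (real_of_int (x+1)) * rho ^ T) + (1-p) * (lam powr (real_of_int (x-1)) * rho ^ T)"
      using p unfolding lam_def rho_def by (intro add_mono mult_left_mono Suc.IH) auto
    also have "\<dots> = lam powr (real_of_int x) * rho ^ T * (p * lam + (1-p) / lam)"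
      using lam0 by (simp add: powr_add powr_diff field_simps)
    also have "p * lam + (1-p) / lam = rho"
    proof -
      have sp: "sqrt p * sqrt p = p" using p by simp
      have sq: "sqrt (1-p) * sqrt (1-p) = 1 - p" using p by simp
      have "p * lam = sqrt p * sqrt (1-p)" unfolding lam_def using p sp
        by (metis divide_eq_eq mult.commute mult.left_commute real_sqrt_gt_0_iff less_irrefl)
      moreover have "(1-p) / lam = sqrt p * sqrt (1-p)" unfolding lam_def using p sq
        by (simp add: field_simps)
      ultimately show ?thesis unfolding rho_def by simp
    qed
    finally have "measure (step_space p) {\<xi>. NH (Suc T) x \<xi>} \<le> lam powr (real_of_int x) * rho ^ T * rho" .
    then show ?thesis unfolding lam_def[symmetric] rho_def[symmetric] by (simp only: power_Suc2 mult.assoc)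
  qed
qed

lemma rho_lt1:
  assumes "0 < p" "p < 1/2"
  shows "2 * sqrt p * sqrt (1-p) < 1"
proof -
  have "sqrt p \<noteq> sqrt (1-p)" using assms by simp
  then have "0 < (sqrt p - sqrt (1-p))^2" by simp
  also have "(sqrt p - sqrt (1-p))^2 = p + (1-p) - 2 * sqrt p * sqrt (1-p)"
    using assms by (simp add: power2_eq_square algebra_simps)
  finally show ?thesis by simp
qed

definition steps :: "(nat \<Rightarrow> int) \<Rightarrow> bool" where
  "steps w \<longleftrightarrow> (\<forall>i. \<bar>w (Suc i) - w i\<bar> \<le> 1)"

lemma steps_walk: "steps (walk_of k \<xi>)"
  unfolding steps_def using walk_diff by blast

lemma ivt_down:
  assumes "steps w" "c \<le> w a" "w (a + d) \<le> c"
  shows "\<exists>i. a \<le> i \<and> i \<le> a + d \<and> w i = c"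
  using assms(2,3)
proof (induction d arbitrary: a)
  case 0 then show ?case by auto
next
  case (Suc d)
  show ?case
  proof (cases "w a = c")
    case True then show ?thesis by auto
  next
    case False
    then have "c + 1 \<le> w a" using Suc.prems by simp
    moreover have "\<bar>w (Suc a) - w a\<bar> \<le> 1" using assms(1) by (simp add: steps_def)
    ultimately have "c \<le> w (Suc a)" by simp
    moreover have "w (Suc a + d) \<le> c" using Suc.prems by simp
    ultimately obtain i where "Suc a \<le> i" "i \<le> Suc a + d" "w i = c" using Suc.IH by blast
    then show ?thesis by (intro exI[of _ i]) auto
  qed
qed

lemma ivt_down':
  assumes "steps w" "a \<le> b" "c \<le> w a" "w b \<le> c"
  shows "\<exists>i. a \<le> i \<and> i \<le> b \<and> w i = c"
  using ivt_down[OF assms(1) assms(3), of "b - a"] assms(2,4) by simp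

lemma tau_facts:
  assumes "steps w" "1 \<le> w 0" "\<exists>n. w n = 0"
  shows "w (tau 0 w) = 0" "\<And>i. i < tau 0 w \<Longrightarrow> 1 \<le> w i"
proof -
  show w0: "w (tau 0 w) = 0" unfolding tau_def using assms(3) by (rule LeastI_ex)
  fix i assume i: "i < tau 0 w"
  show "1 \<le> w i"
  proof (rule ccontr)
    assume "\<not> 1 \<le> w i"
    then have "w i \<le> 0" by simp
    then obtain j where "0 \<le> j" "j \<le> i" "w j = 0" using ivt_down'[OF assms(1), of 0 i 0] assms(2) by auto
    then have "tau 0 w \<le> j" unfolding tau_def by (simp add: Least_le)
    then show False using i \<open>j \<le> i\<close> by simp
  qed
qed

lemma Smax_facts:
  shows "\<exists>n0\<le>tau 0 w. w n0 = Smax w" "\<And>n. n \<le> tau 0 w \<Longrightarrow> w n \<le> Smax w"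
proof -
  have eq: "{w n | n. n \<le> tau 0 w} = w ` {..tau 0 w}" by auto
  have "Smax w \<in> w ` {..tau 0 w}" unfolding Smax_def eq by (rule Max_in) auto
  then show "\<exists>n0\<le>tau 0 w. w n0 = Smax w" by auto
  fix n assume "n \<le> tau 0 w"
  then show "w n \<le> Smax w" unfolding Smax_def eq by (intro Max_ge) auto
qed

lemma sigma_facts:
  assumes "steps w" "1 \<le> w 0" "\<exists>n. w n = 0" "0 \<le> c" "c \<le> Smax w"
  shows "w (sigma c w) = c" "\<And>j. j < sigma c w \<Longrightarrow> 1 \<le> w j"
proof -
  define t where "t = tau 0 w"
  define P where "P = (\<lambda>n. w n = c \<and> (\<forall>j<n. w j \<ge> 1))"
  have wt: "w t = 0" and lt: "\<And>i. i < t \<Longrightarrow> 1 \<le> w i" using tau_facts[OF assms(1-3)] by (auto simp: t_def)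
  obtain n0 where n0: "n0 \<le> t" "w n0 = Smax w" using Smax_facts(1) by (auto simp: t_def)
  obtain i where i: "n0 \<le> i" "i \<le> t" "w i = c"
    using ivt_down'[OF assms(1) n0(1), of c] n0(2) assms(5) wt assms(4) by auto
  have Pi: "P i" unfolding P_def using i lt by auto
  have bnd: "\<forall>y. P y \<longrightarrow> y \<le> t"
  proof (intro allI impI)
    fix y assume "P y"
    show "y \<le> t"
    proof (rule ccontr)
      assume "\<not> y \<le> t"
      then have "t < y" by simp
      then have "1 \<le> w t" using \<open>P y\<close> unfolding P_def by auto
      then show False using wt by simp
    qed
  qed
  have "P (Greatest P)" using Pi bnd by (intro GreatestI_nat[of P i t]) auto
  moreover have "sigma c w = Greatest P" unfolding sigma_def P_def ..
  ultimately show "w (sigma c w) = c" "\<And>j. j < sigma c w \<Longrightarrow> 1 \<le> w j" unfolding P_def by auto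
qed

lemma log_gap:
  assumes N: "1 < (N::real)" and y: "0 < y" and k: "0 < k"
    and gap: "\<not> (ln k / ln N - ln y / ln N \<le> \<epsilon>)"
  shows "y * N powr \<epsilon> < k"
proof -
  have lnN: "0 < ln N" using N by simp
  have "\<epsilon> < (ln k - ln y) / ln N" using gap by (simp add: diff_divide_distrib)
  then have "\<epsilon> * ln N < ln k - ln y" using lnN by (simp add: pos_less_divide_eq)
  then have "ln (y * N powr \<epsilon>) < ln k" using y N by (simp add: ln_mult ln_powr)
  then show ?thesis using y N k by (subst (asm) ln_less_cancel_iff) auto
qed

definition DB :: "real \<Rightarrow> (nat \<Rightarrow> int) \<Rightarrow> bool" where
  "DB M w \<longleftrightarrow> (\<exists>n m. n \<le> m \<and> 1 \<le> w n \<and> (\<forall>i<m. 1 \<le> w i) \<and> \<lfloor>real_of_int (w n) * M\<rfloor> \<le> w m)"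

lemma bad1:
  assumes "steps w" "1 \<le> w 0" "\<exists>n. w n = 0" "2 \<le> N"
    and "\<not> (\<forall>n < sigma (Smax w) w. logN N (real_of_int (Smax w)) - logN N (real_of_int (w n)) \<le> \<epsilon>)"
  shows "DB (real N powr \<epsilon>) w"
proof -
  obtain n where n: "n < sigma (Smax w) w"
    and g: "\<not> (logN N (real_of_int (Smax w)) - logN N (real_of_int (w n)) \<le> \<epsilon>)" using assms(5) by auto
  have S1: "1 \<le> Smax w" using Smax_facts(2)[of 0 w] assms(2) by simp
  have s1: "w (sigma (Smax w) w) = Smax w" and s2: "\<And>j. j < sigma (Smax w) w \<Longrightarrow> 1 \<le> w j"
    using sigma_facts[OF assms(1-3), of "Smax w"] S1 by auto
  have y1: "1 \<le> w n" using s2 n by simp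
  have "real_of_int (w n) * real N powr \<epsilon> < real_of_int (Smax w)"
    using g assms(4) y1 S1 unfolding logN_def by (intro log_gap) auto
  then have "\<lfloor>real_of_int (w n) * real N powr \<epsilon>\<rfloor> \<le> w (sigma (Smax w) w)"
    unfolding s1 by linarith
  then show ?thesis unfolding DB_def using n y1 s2 by (intro exI[of _ n] exI[of _ "sigma (Smax w) w"]) auto
qed

lemma bad2:
  assumes "steps w" "1 \<le> w 0" "\<exists>n. w n = 0" "2 \<le> N"
    and "\<not> (\<forall>k. 0 < k \<and> k \<le> Smax w \<longrightarrow>
                  (\<forall>n. sigma k w \<le> n \<and> n < sigma (k - 1) w \<longrightarrow>
                     logN N (real_of_int k) - logN N (real_of_int (w n)) \<le> \<epsilon>))"
  shows "DB (real N powr \<epsilon>) w"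
proof -
  obtain k n where k: "0 < k" "k \<le> Smax w" and n: "n < sigma (k - 1) w"
    and g: "\<not> (logN N (real_of_int k) - logN N (real_of_int (w n)) \<le> \<epsilon>)" using assms(5) by auto
  have s1: "w (sigma (k-1) w) = k - 1" and s2: "\<And>j. j < sigma (k-1) w \<Longrightarrow> 1 \<le> w j"
    using sigma_facts[OF assms(1-3), of "k-1"] k by auto
  have y1: "1 \<le> w n" using s2 n by simp
  have "real_of_int (w n) * real N powr \<epsilon> < real_of_int k"
    using g assms(4) y1 k unfolding logN_def by (intro log_gap) auto
  then have "\<lfloor>real_of_int (w n) * real N powr \<epsilon>\<rfloor> \<le> w (sigma (k-1) w)"
    unfolding s1 by linarith
  then show ?thesis unfolding DB_def using n y1 s2 by (intro exI[of _ n] exI[of _ "sigma (k-1) w"]) auto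
qed

lemma tau_eq: "w t = 0 \<Longrightarrow> (\<forall>i<t. w i \<noteq> 0) \<Longrightarrow> tau 0 w = t"
  unfolding tau_def by (rule Least_equality) (auto simp: not_less[symmetric])

lemma sigma_dep:
  assumes wt: "w t = 0" and agree: "\<forall>i\<le>t. w i = w' i"
  shows "sigma k w = sigma k w'" "sigma k w \<le> max t (GREATEST n::nat. False)"
proof -
  define P where "P = (\<lambda>w::nat\<Rightarrow>int. \<lambda>n. w n = k \<and> (\<forall>j<n. w j \<ge> 1))"
  have wt': "w' t = 0" using wt agree by auto
  have PP: "P w = P w'"
  proof (rule ext)
    fix n show "P w n = P w' n"
    proof (cases "n \<le> t")
      case True then show ?thesis unfolding P_def using agree by auto
    next
      case False
      then have "\<not> P w n" "\<not> P w' n" unfolding P_def using wt wt' by (auto simp: not_le)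
      then show ?thesis by simp
    qed
  qed
  have sd: "\<And>k w. sigma k w = Greatest (\<lambda>n. w n = k \<and> (\<forall>j<n. w j \<ge> 1))" unfolding sigma_def ..
  show "sigma k w = sigma k w'" unfolding sd using PP unfolding P_def by simp
  show "sigma k w \<le> max t (GREATEST n::nat. False)"
  proof (cases "\<exists>n. P w n")
    case True
    then obtain n where n: "P w n" by auto
    have bnd: "\<And>y. P w y \<Longrightarrow> y \<le> t"
    proof (rule ccontr)
      fix y assume "P w y" "\<not> y \<le> t"
      then have "1 \<le> w t" unfolding P_def by auto
      then show False using wt by simp
    qed
    have "P w (Greatest (P w))" using n bnd by (rule GreatestI_nat)
    then have "Greatest (P w) \<le> t" using bnd by blast
    then show ?thesis unfolding sd P_def by simp
  next
    case False
    then have "P w = (\<lambda>_. False)" by auto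
    then show ?thesis unfolding sd P_def by simp
  qed
qed

lemma Smax_dep:
  assumes "\<forall>i\<le>t. w i = w' i" "tau 0 w = t" "tau 0 w' = t"
  shows "Smax w = Smax w'"
proof -
  have "{w n | n. n \<le> tau 0 w} = {w' n | n. n \<le> tau 0 w'}" using assms by force
  then show ?thesis unfolding Smax_def by simp
qed

lemma G_sets:
  fixes \<Phi> :: "(nat \<Rightarrow> int) \<Rightarrow> bool"
  assumes dep: "\<And>t w w'. w t = 0 \<Longrightarrow> (\<forall>i<t. w i \<noteq> 0) \<Longrightarrow> (\<forall>i\<le>max t (GREATEST n::nat. False). w i = w' i)
      \<Longrightarrow> \<Phi> w \<Longrightarrow> \<Phi> w'"
  shows "{w \<in> space (PiM UNIV (\<lambda>_. count_space (UNIV::int set))). (\<exists>n. w n = 0) \<and> \<Phi> w}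
     \<in> sets (PiM UNIV (\<lambda>_. count_space (UNIV::int set)))"
proof -
  define A where "A = (\<lambda>t. {w::nat\<Rightarrow>int. w t = 0 \<and> (\<forall>i<t. w i \<noteq> 0) \<and> \<Phi> w})"
  have eq: "{w \<in> space (PiM UNIV (\<lambda>_. count_space (UNIV::int set))). (\<exists>n. w n = 0) \<and> \<Phi> w} = (\<Union>t. A t)"
  proof (intro set_eqI iffI)
    fix w assume "w \<in> {w \<in> space (PiM UNIV (\<lambda>_. count_space (UNIV::int set))). (\<exists>n. w n = 0) \<and> \<Phi> w}"
    then have h: "\<exists>n. w n = 0" "\<Phi> w" by auto
    define t where "t = (LEAST n. w n = 0)"
    have "w t = 0" unfolding t_def using h(1) by (rule LeastI_ex)
    moreover have "\<forall>i<t. w i \<noteq> 0" unfolding t_def using not_less_Least by blast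
    ultimately show "w \<in> (\<Union>t. A t)" using h unfolding A_def by blast
  next
    fix w assume "w \<in> (\<Union>t. A t)"
    then show "w \<in> {w \<in> space (PiM UNIV (\<lambda>_. count_space (UNIV::int set))). (\<exists>n. w n = 0) \<and> \<Phi> w}"
      unfolding A_def by (auto simp: space_PiM)
  qed
  have "A t \<in> sets (PiM UNIV (\<lambda>_. count_space (UNIV::int set)))" for t
    unfolding A_def
  proof (rule fin_dep_sets[of "max t (GREATEST n::nat. False)"])
    fix w w' :: "nat \<Rightarrow> int"
    assume ag: "\<forall>i\<le>max t (GREATEST n::nat. False). w i = w' i"
      and h: "w t = 0 \<and> (\<forall>i<t. w i \<noteq> 0) \<and> \<Phi> w"
    have "w' t = 0" "\<forall>i<t. w' i \<noteq> 0" using ag h by auto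
    moreover have "\<Phi> w'" using dep[of w t w'] ag h by blast
    ultimately show "w' t = 0 \<and> (\<forall>i<t. w' i \<noteq> 0) \<and> \<Phi> w'" by blast
  qed
  then show ?thesis unfolding eq by (intro sets.countable_UN) auto
qed

definition Phi1 :: "nat \<Rightarrow> real \<Rightarrow> (nat \<Rightarrow> int) \<Rightarrow> bool" where
  "Phi1 N \<epsilon> w \<longleftrightarrow> (\<forall>n < sigma (Smax w) w.
                  logN N (real_of_int (Smax w)) - logN N (real_of_int (w n)) \<le> \<epsilon>)"

definition Phi2 :: "nat \<Rightarrow> real \<Rightarrow> (nat \<Rightarrow> int) \<Rightarrow> bool" where
  "Phi2 N \<epsilon> w \<longleftrightarrow> (\<forall>k. 0 < k \<and> k \<le> Smax w \<longrightarrow>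
                  (\<forall>n. sigma k w \<le> n \<and> n < sigma (k - 1) w \<longrightarrow>
                     logN N (real_of_int k) - logN N (real_of_int (w n)) \<le> \<epsilon>))"

lemma agree_facts:
  assumes "w t = 0" "\<forall>i<t. w i \<noteq> 0" "\<forall>i\<le>max t (GREATEST n::nat. False). w i = w' i"
  shows "Smax w = Smax w'" "\<And>k. sigma k w = sigma k w'" "\<And>k n. n < sigma k w \<Longrightarrow> w n = w' n"
proof -
  have ag: "\<forall>i\<le>t. w i = w' i" using assms(3) by auto
  have "tau 0 w = t" using assms(1,2) by (rule tau_eq)
  moreover have "tau 0 w' = t" using assms ag by (intro tau_eq) auto
  ultimately show "Smax w = Smax w'" using ag by (intro Smax_dep) auto
  show "\<And>k. sigma k w = sigma k w'" using sigma_dep(1)[OF assms(1) ag] .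
  fix k n assume "n < sigma k w"
  then show "w n = w' n" using sigma_dep(2)[OF assms(1) ag, of k] assms(3) by auto
qed

lemma G1_sets: "{w \<in> space (PiM UNIV (\<lambda>_. count_space (UNIV::int set))). (\<exists>n. w n = 0) \<and> Phi1 N \<epsilon> w}
     \<in> sets (PiM UNIV (\<lambda>_. count_space (UNIV::int set)))"
proof (rule G_sets)
  fix t and w w' :: "nat \<Rightarrow> int"
  assume a: "w t = 0" "\<forall>i<t. w i \<noteq> 0" "\<forall>i\<le>max t (GREATEST n::nat. False). w i = w' i" "Phi1 N \<epsilon> w"
  note f = agree_facts[OF a(1-3)]
  show "Phi1 N \<epsilon> w'" using a(4) unfolding Phi1_def f(1)[symmetric] f(2)[symmetric]
    using f(3) by metis
qed

lemma G2_sets: "{w \<in> space (PiM UNIV (\<lambda>_. count_space (UNIV::int set))). (\<exists>n. w n = 0) \<and> Phi2 N \<epsilon> w}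
     \<in> sets (PiM UNIV (\<lambda>_. count_space (UNIV::int set)))"
proof (rule G_sets)
  fix t and w w' :: "nat \<Rightarrow> int"
  assume a: "w t = 0" "\<forall>i<t. w i \<noteq> 0" "\<forall>i\<le>max t (GREATEST n::nat. False). w i = w' i" "Phi2 N \<epsilon> w"
  note f = agree_facts[OF a(1-3)]
  show "Phi2 N \<epsilon> w'" using a(4) unfolding Phi2_def f(1)[symmetric] f(2)[symmetric]
    using f(3) by metis
qed

lemma walk_meas: "walk_of x \<in> measurable (step_space p) (PiM UNIV (\<lambda>_. count_space (UNIV::int set)))"
proof (rule measurable_PiM_single')
  fix i :: nat
  show "(\<lambda>\<xi>. walk_of x \<xi> i) \<in> measurable (step_space p) (count_space UNIV)"
    unfolding measurable_count_space_eq2_countable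
  proof (intro conjI ballI)
    fix a :: int
    have "{\<xi>. walk_of x \<xi> i = a} \<in> sets (step_space p)"
      unfolding sets_step_space by (rule fin_dep_sets[of i]) (metis walk_dep)
    then show "(\<lambda>\<xi>. walk_of x \<xi> i) -` {a} \<inter> space (step_space p) \<in> sets (step_space p)"
      by (simp add: vimage_def)
  qed auto
qed (auto simp: space_PiM)

lemma pow2_choice:
  assumes "(1::int) \<le> y" "y \<le> 2^J"
  shows "\<exists>j\<le>J. y \<le> 2^j \<and> 2^j < 2*y"
proof -
  define j where "j = (LEAST j. y \<le> 2^j)"
  have yj: "y \<le> 2^j" unfolding j_def using assms(2) by (rule LeastI)
  have jJ: "j \<le> J" unfolding j_def using assms(2) by (rule Least_le)
  have "2^j < 2*y"
  proof (cases j)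
    case 0 then show ?thesis using assms(1) by simp
  next
    case (Suc j')
    then have "\<not> y \<le> 2^j'" unfolding j_def using not_less_Least[of j' "\<lambda>j. y \<le> 2^j"] j_def by auto
    then show ?thesis using Suc by simp
  qed
  then show ?thesis using yj jJ by blast
qed

lemma cover:
  assumes db: "DB M (walk_of x0 \<xi>)" and M: "4 \<le> M"
  shows "(\<exists>j\<le>J. \<exists>T. R (2^j) \<lfloor>2^j * M / 2\<rfloor> T x0 False \<xi>) \<or> (\<exists>T. R x0 (2^J + 1) T x0 True \<xi>)"
proof -
  let ?w = "walk_of x0 \<xi>"
  obtain n m where nm: "n \<le> m" "1 \<le> ?w n" "\<forall>i<m. 1 \<le> ?w i" "\<lfloor>real_of_int (?w n) * M\<rfloor> \<le> ?w m"
    using db unfolding DB_def by blast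
  show ?thesis
  proof (cases "?w n \<le> 2^J")
    case False
    have "R x0 (2^J + 1) n x0 True \<xi>"
      using False nm by (intro R_path) auto
    then show ?thesis by blast
  next
    case True
    obtain j where j: "j \<le> J" "?w n \<le> 2^j" "2^j < 2 * ?w n" using pow2_choice[OF nm(2) True] by blast
    have "(2::real)^j / 2 \<le> real_of_int (?w n)"
    proof -
      have "real_of_int ((2::int)^j) < real_of_int (2 * ?w n)" using j(3) by (simp only: of_int_less_iff)
      then show ?thesis by simp
    qed
    then have "((2::real)^j / 2) * M \<le> real_of_int (?w n) * M" using M by (intro mult_right_mono) auto
    then have "(2::real)^j * M / 2 \<le> real_of_int (?w n) * M" by simp
    then have "\<lfloor>(2::real)^j * M / 2\<rfloor> \<le> ?w m" using nm(4) by (meson floor_mono order_trans)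
    then have "R (2^j) \<lfloor>2^j * M / 2\<rfloor> m x0 False \<xi>"
      using nm j by (intro R_path) auto
    then show ?thesis using j(1) by blast
  qed
qed

lemma frac_bound:
  assumes M: "4 \<le> M"
  shows "0 < \<lfloor>(2::real)^j * M / 2\<rfloor>" "real_of_int ((2::int)^j) / real_of_int \<lfloor>(2::real)^j * M / 2\<rfloor> \<le> 4 / M"
proof -
  define z where "z = (2::real)^j * M / 2"
  have "1 \<le> (2::real)^j" by simp
  then have z2: "2 \<le> z" unfolding z_def using M by (simp add: mult_mono[of 1 "2^j" 4 M, simplified])
  have fz: "z / 2 \<le> real_of_int \<lfloor>z\<rfloor>" using z2 by linarith
  show "0 < \<lfloor>(2::real)^j * M / 2\<rfloor>" using fz z2 unfolding z_def[symmetric] by linarith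
  have "(2::real)^j / real_of_int \<lfloor>z\<rfloor> \<le> (2::real)^j / (z/2)"
    by (rule divide_left_mono) (use fz z2 in auto)
  then have "real_of_int ((2::int)^j) / real_of_int \<lfloor>z\<rfloor> \<le> (2::real)^j / (z/2)" by simp
  also have "\<dots> = 4 / M" unfolding z_def using M by (simp add: field_simps)
  finally show "real_of_int ((2::int)^j) / real_of_int \<lfloor>(2::real)^j * M / 2\<rfloor> \<le> 4 / M" unfolding z_def .
qed

lemma never_zero:
  assumes "1 \<le> w 0" "steps w" "\<not> (\<exists>n. w n = 0)"
  shows "1 \<le> w i"
proof (induction i)
  case 0 then show ?case using assms by simp
next
  case (Suc i)
  have "\<bar>w (Suc i) - w i\<bar> \<le> 1" using assms(2) by (simp add: steps_def)
  moreover have "w (Suc i) \<noteq> 0" using assms(3) by blast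
  ultimately show ?case using Suc.IH by linarith
qed

lemma main_bound:
  assumes p: "0 < p" "p < 1/2" and x0: "1 \<le> x0" and M: "4 \<le> M"
    and G: "G \<in> sets (PiM UNIV (\<lambda>_. count_space (UNIV::int set)))"
    and bad: "\<And>w. steps w \<Longrightarrow> 1 \<le> w 0 \<Longrightarrow> w \<notin> G \<Longrightarrow> (\<exists>n. w n = 0) \<Longrightarrow> DB M w"
  shows "1 - ((real J + 1) * (4 / M) + real_of_int x0 / (2^J + 1)) \<le> measure (rw_law p x0) G"
proof -
  interpret prob_space "step_space p" by (rule prob_step)
  define E where "E = (real J + 1) * (4 / M) + real_of_int x0 / (2^J + 1)"
  define Gx where "Gx = walk_of x0 -` G"
  have meq: "measure (rw_law p x0) G = measure (step_space p) Gx"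
    unfolding rw_law_def Gx_def using measure_distr[OF walk_meas G] by simp
  have Gx: "Gx \<in> sets (step_space p)"
    using measurable_sets[OF walk_meas G] unfolding Gx_def by simp
  define Rs where "Rs = (\<lambda>j::nat. {\<xi>. \<exists>T. R (2^j) \<lfloor>2^j * M / 2\<rfloor> T x0 False \<xi>})"
  define Big where "Big = {\<xi>. \<exists>T. R x0 (2^J + 1) T x0 True \<xi>}"
  define NHs where "NHs = (\<lambda>T. {\<xi>. NH T x0 \<xi>})"
  define lam where "lam = sqrt (1-p) / sqrt p"
  define rho where "rho = 2 * sqrt p * sqrt (1-p)"
  have sub: "UNIV - Gx \<subseteq> NHs T \<union> ((\<Union>j\<in>{..J}. Rs j) \<union> Big)" for T
  proof
    fix \<xi> assume "\<xi> \<in> UNIV - Gx"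
    then have nG: "walk_of x0 \<xi> \<notin> G" unfolding Gx_def by simp
    show "\<xi> \<in> NHs T \<union> ((\<Union>j\<in>{..J}. Rs j) \<union> Big)"
    proof (cases "\<exists>n. walk_of x0 \<xi> n = 0")
      case True
      then have "DB M (walk_of x0 \<xi>)" using bad[OF steps_walk _ nG] x0 by simp
      then show ?thesis using cover[OF _ M, of x0 \<xi> J] unfolding Rs_def Big_def by blast
    next
      case False
      then have "\<forall>i\<le>T. 1 \<le> walk_of x0 \<xi> i" using never_zero[OF _ steps_walk] x0 by auto
      then show ?thesis unfolding NHs_def using NH_path by blast
    qed
  qed
  have Rs_s: "Rs j \<in> sets (step_space p)" for j unfolding Rs_def by (rule R_inf_sets)
  have Big_s: "Big \<in> sets (step_space p)" unfolding Big_def by (rule R_inf_sets)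
  have NH_s: "NHs T \<in> sets (step_space p)" for T unfolding NHs_def by (rule NH_sets)
  have Rs_b: "measure (step_space p) (Rs j) \<le> 4 / M" for j
  proof -
    have H0: "0 < \<lfloor>(2::real)^j * M / 2\<rfloor>" using frac_bound(1)[OF M] .
    have "measure (step_space p) (Rs j) \<le> (if False \<or> x0 \<le> 2^j then max 0 (real_of_int x0) / \<lfloor>(2::real)^j * M / 2\<rfloor>
        else real_of_int ((2::int)^j) / \<lfloor>(2::real)^j * M / 2\<rfloor>)"
      unfolding Rs_def using p H0 by (intro R_inf_bound) auto
    also have "\<dots> \<le> real_of_int ((2::int)^j) / \<lfloor>(2::real)^j * M / 2\<rfloor>"
    proof -
      have "x0 \<le> 2^j \<Longrightarrow> max 0 (real_of_int x0) \<le> real_of_int ((2::int)^j)"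
      proof -
        assume "x0 \<le> 2^j"
        then have "real_of_int x0 \<le> real_of_int ((2::int)^j)" by (simp only: of_int_le_iff)
        then show ?thesis using x0 by simp
      qed
      then show ?thesis using H0 by (auto intro!: divide_right_mono)
    qed
    also have "\<dots> \<le> 4 / M" by (rule frac_bound(2)[OF M])
    finally show ?thesis .
  qed
  have Big_b: "measure (step_space p) Big \<le> real_of_int x0 / (2^J + 1)"
  proof -
    have "measure (step_space p) Big \<le> (if True \<or> x0 \<le> x0 then max 0 (real_of_int x0) / real_of_int ((2::int)^J + 1)
        else real_of_int x0 / real_of_int ((2::int)^J + 1))"
      unfolding Big_def using p x0 by (intro R_inf_bound) auto
    then show ?thesis using x0 by simp
  qed
  have NH_b: "measure (step_space p) (NHs T) \<le> lam powr (real_of_int x0) * rho ^ T" for T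
    unfolding NHs_def lam_def rho_def using p by (intro NH_bound) auto
  have bT: "measure (step_space p) (UNIV - Gx) \<le> lam powr (real_of_int x0) * rho ^ T + E" for T
  proof -
    have "measure (step_space p) (UNIV - Gx) \<le> measure (step_space p) (NHs T \<union> ((\<Union>j\<in>{..J}. Rs j) \<union> Big))"
      using sub NH_s Rs_s Big_s by (intro finite_measure_mono) auto
    also have "\<dots> \<le> measure (step_space p) (NHs T) + measure (step_space p) ((\<Union>j\<in>{..J}. Rs j) \<union> Big)"
      using NH_s Rs_s Big_s by (intro measure_Un_le) auto
    also have "measure (step_space p) ((\<Union>j\<in>{..J}. Rs j) \<union> Big) \<le> measure (step_space p) (\<Union>j\<in>{..J}. Rs j) + measure (step_space p) Big"
      using Rs_s Big_s by (intro measure_Un_le) auto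
    also have "measure (step_space p) (\<Union>j\<in>{..J}. Rs j) \<le> (\<Sum>j\<in>{..J}. measure (step_space p) (Rs j))"
      using Rs_s by (intro finite_measure_subadditive_finite) auto
    also have "(\<Sum>j\<in>{..J}. measure (step_space p) (Rs j)) \<le> (\<Sum>j\<in>{..J}. 4 / M)"
      using Rs_b by (intro sum_mono) auto
    also have "(\<Sum>j\<in>{..J}. 4 / M) = (real J + 1) * (4 / M)" by simp
    finally show ?thesis using NH_b[of T] Big_b unfolding E_def by linarith
  qed
  have rho1: "rho < 1" unfolding rho_def using p by (rule rho_lt1)
  have rho0: "0 \<le> rho" unfolding rho_def using p by simp
  have "(\<lambda>T. lam powr (real_of_int x0) * rho ^ T + E) \<longlonglongrightarrow> lam powr (real_of_int x0) * 0 + E"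
    using rho0 rho1 by (intro tendsto_intros LIMSEQ_power_zero) auto
  then have "measure (step_space p) (UNIV - Gx) \<le> E"
    using bT by (intro LIMSEQ_le_const) auto
  moreover have "measure (step_space p) (UNIV - Gx) = 1 - measure (step_space p) Gx"
    using prob_compl[OF Gx] by simp
  ultimately show ?thesis unfolding meq E_def by linarith
qed



lemma prob_rw: "0 \<le> p \<Longrightarrow> p \<le> 1 \<Longrightarrow> prob_space (rw_law p k)"
  unfolding rw_law_def by (intro prob_space.prob_space_distr prob_step walk_meas)

lemma ln_ge1: assumes "4 \<le> (x::real)" shows "1 \<le> ln x"
proof -
  have "ln (4::real) \<le> ln x" using assms by (subst ln_le_cancel_iff) auto
  moreover have "ln (4::real) = 2 * ln 2" using ln_realpow[of "2::real" 2] by simp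
  ultimately show ?thesis using ln2_ge_two_thirds by linarith
qed

lemma kN_bounds:
  assumes "4 \<le> N"
  shows "1 \<le> kN N" "real_of_int (kN N) \<le> real N"
proof -
  have N: "4 \<le> real N" using assms by simp
  have l1: "1 \<le> ln (real N)" using N by (intro ln_ge1) auto
  have sl: "1 \<le> sqrt (ln (real N))" using l1 by simp
  have "ln (real N) \<le> real N - 1" using N by (intro ln_le_minus_one) auto
  then have "sqrt (ln (real N)) \<le> sqrt (real N)" by simp
  also have "sqrt (real N) \<le> sqrt (real N ^ 2)"
  proof -
    have "real N \<le> real N ^ 2" using N by (simp add: power2_eq_square)
    then show ?thesis by (simp only: real_sqrt_le_iff)
  qed
  also have "sqrt (real N ^ 2) = real N" by simp
  finally have sN: "sqrt (ln (real N)) \<le> real N" .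
  have "1 \<le> real N / sqrt (ln (real N))" using sN sl by (simp add: le_divide_eq)
  then show "1 \<le> kN N" unfolding kN_def by (simp add: le_floor_iff)
  have "real N / sqrt (ln (real N)) \<le> real N" using sl N by (simp add: divide_le_eq mult_le_cancel_left1)
  then show "real_of_int (kN N) \<le> real N" unfolding kN_def by linarith
qed

lemma err_bound:
  assumes N: "4 \<le> N" and M: "0 < M" and x0: "real_of_int x0 \<le> real N"
  defines "J \<equiv> nat \<lceil>2 * log 2 (real N)\<rceil>"
  shows "(real J + 1) * (4 / M) + real_of_int x0 / (2^J + 1)
     \<le> (2 * log 2 (real N) + 2) * (4 / M) + 1 / real N"
proof -
  have Npos: "0 < real N" using N by simp
  have lg: "0 \<le> log 2 (real N)" using N by simp
  have c0: "0 \<le> \<lceil>2 * log 2 (real N)\<rceil>" using lg by simp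
  have RJ: "real J = real_of_int \<lceil>2 * log 2 (real N)\<rceil>" unfolding J_def using c0 by (rule of_nat_nat)
  have J1: "real J + 1 \<le> 2 * log 2 (real N) + 2"
    using RJ of_int_ceiling_le_add_one[of "2 * log 2 (real N)"] by linarith
  have "real N ^ 2 = real N powr 2" using Npos by (simp add: powr_numeral)
  also have "\<dots> = (2 powr log 2 (real N)) powr 2" using Npos by simp
  also have "\<dots> = 2 powr (2 * log 2 (real N))" by (simp add: powr_powr mult.commute)
  also have "\<dots> \<le> 2 powr (real J)"
    using RJ le_of_int_ceiling[of "2 * log 2 (real N)"] by (intro powr_mono) auto
  also have "\<dots> = 2 ^ J" by (simp add: powr_realpow)
  finally have N2: "real N ^ 2 \<le> 2 ^ J" .
  have "real_of_int x0 / (2^J + 1) \<le> real N / (real N ^ 2)"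
  proof (cases "0 \<le> x0")
    case True
    have "0 < real N ^ 2" using Npos by simp
    moreover have "real N ^ 2 \<le> 2^J + 1" using N2 by simp
    ultimately show ?thesis using x0 Npos by (intro frac_le) auto
  next
    case False
    have "(0::real) < 2^J + 1" by (simp add: add_pos_pos)
    then have "real_of_int x0 / (2^J + 1) \<le> 0" using False by (intro divide_nonpos_pos) auto
    also have "0 \<le> real N / (real N ^ 2)" by simp
    finally show ?thesis .
  qed
  also have "real N / (real N ^ 2) = 1 / real N" using Npos by (simp add: power2_eq_square)
  finally have "real_of_int x0 / (2^J + 1) \<le> 1 / real N" .
  moreover have "(real J + 1) * (4 / M) \<le> (2 * log 2 (real N) + 2) * (4 / M)"
    using J1 M by (intro mult_right_mono) auto
  ultimately show ?thesis by linarith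
qed

lemma g_lim:
  assumes "0 < \<epsilon>"
  shows "(\<lambda>N. 1 - ((2 * log 2 (real N) + 2) * (4 / real N powr \<epsilon>) + 1 / real N)) \<longlonglongrightarrow> 1"
proof -
  have "(\<lambda>N. 1 - ((8 / ln 2) * (ln (real N) / real N powr \<epsilon>) + 8 * (1 / real N powr \<epsilon>) + 1 / real N))
        \<longlonglongrightarrow> 1 - ((8 / ln 2) * 0 + 8 * 0 + 0)"
    using assms by (intro tendsto_intros lim_ln_over_power lim_1_over_real_power lim_const_over_n) auto
  moreover have "(2 * log 2 (real N) + 2) * (4 / real N powr \<epsilon>) + 1 / real N
      = (8 / ln 2) * (ln (real N) / real N powr \<epsilon>) + 8 * (1 / real N powr \<epsilon>) + 1 / real N" for N
  proof -
    have l2: "ln (2::real) \<noteq> 0" by simp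
    show ?thesis by (cases "real N powr \<epsilon> = 0") (simp_all add: log_def field_simps l2)
  qed
  ultimately show ?thesis by simp
qed


lemma final_generic:
  fixes a \<epsilon> :: real and \<phi> :: "nat \<Rightarrow> real" and G :: "nat \<Rightarrow> (nat \<Rightarrow> int) set"
  assumes a: "a > 0" and phi: "\<And>N. 0 < \<phi> N \<and> \<phi> N \<le> 1" and eps: "\<epsilon> > 0"
    and sets: "\<And>N. G N \<in> sets (PiM UNIV (\<lambda>_. count_space (UNIV::int set)))"
    and bad: "\<And>N w. 2 \<le> N \<Longrightarrow> steps w \<Longrightarrow> 1 \<le> w 0 \<Longrightarrow> w \<notin> G N \<Longrightarrow> (\<exists>n. w n = 0) \<Longrightarrow> DB (real N powr \<epsilon>) w"
  shows "(\<lambda>N. measure (rw_law (p0N a \<phi> N) (kN N)) (G N)) \<longlonglongrightarrow> 1"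
proof -
  have p: "0 < p0N a \<phi> N" "p0N a \<phi> N < 1/2" for N
  proof -
    have "0 < a * \<phi> N" using a phi[of N] by simp
    then show "0 < p0N a \<phi> N" "p0N a \<phi> N < 1/2" unfolding p0N_def by (auto simp: field_simps)
  qed
  define g where "g = (\<lambda>N. 1 - ((2 * log 2 (real N) + 2) * (4 / real N powr \<epsilon>) + 1 / real N))"
  have glim: "g \<longlonglongrightarrow> 1" unfolding g_def using eps by (rule g_lim)
  have "eventually (\<lambda>N. 1 / real N powr \<epsilon> < 1/4) sequentially"
    using lim_1_over_real_power[OF eps] by (rule order_tendstoD(2)) simp
  moreover have "eventually (\<lambda>N. 4 \<le> N) sequentially" by (rule eventually_ge_at_top)
  ultimately have ev: "eventually (\<lambda>N. 4 \<le> N \<and> 4 \<le> real N powr \<epsilon>) sequentially"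
  proof eventually_elim
    case (elim N)
    then have "0 < real N powr \<epsilon>" by simp
    then have "4 \<le> real N powr \<epsilon>" using elim(1) by (simp add: divide_less_eq)
    then show ?case using elim by simp
  qed
  have lower: "eventually (\<lambda>N. g N \<le> measure (rw_law (p0N a \<phi> N) (kN N)) (G N)) sequentially"
    using ev
  proof eventually_elim
    case (elim N)
    define J where "J = nat \<lceil>2 * log 2 (real N)\<rceil>"
    have k: "1 \<le> kN N" "real_of_int (kN N) \<le> real N" using kN_bounds elim by auto
    have "1 - ((real J + 1) * (4 / real N powr \<epsilon>) + real_of_int (kN N) / (2^J + 1))
        \<le> measure (rw_law (p0N a \<phi> N) (kN N)) (G N)"
      using p[of N] k(1) elim sets bad[of N] by (intro main_bound) auto
    moreover have "(real J + 1) * (4 / real N powr \<epsilon>) + real_of_int (kN N) / (2^J + 1)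
     \<le> (2 * log 2 (real N) + 2) * (4 / real N powr \<epsilon>) + 1 / real N"
      unfolding J_def using elim k(2) by (intro err_bound) auto
    ultimately show ?case unfolding g_def by linarith
  qed
  have upper: "eventually (\<lambda>N. measure (rw_law (p0N a \<phi> N) (kN N)) (G N) \<le> 1) sequentially"
  proof (rule always_eventually, rule allI)
    fix N
    interpret prob_space "rw_law (p0N a \<phi> N) (kN N)" using p[of N] by (intro prob_rw) auto
    show "measure (rw_law (p0N a \<phi> N) (kN N)) (G N) \<le> 1" by (rule prob_le_1)
  qed
  show ?thesis using lower upper glim tendsto_const by (rule tendsto_sandwich)
qed

theorem lemma4p6:
  fixes a \<epsilon> :: real and \<phi> :: "nat \<Rightarrow> real"
  assumes "a > 0" and "\<And>N. 0 < \<phi> N \<and> \<phi> N \<le> 1" and "\<epsilon> > 0"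
  shows "((\<lambda>N. measure (rw_law (p0N a \<phi> N) (kN N))
            {w \<in> space (rw_law (p0N a \<phi> N) (kN N)).
               (\<exists>n. w n = 0) \<and>
               (\<forall>n < sigma (Smax w) w.
                  logN N (real_of_int (Smax w)) - logN N (real_of_int (w n)) \<le> \<epsilon>)})
          \<longlonglongrightarrow> 1) \<and>
         ((\<lambda>N. measure (rw_law (p0N a \<phi> N) (kN N))
            {w \<in> space (rw_law (p0N a \<phi> N) (kN N)).
               (\<exists>n. w n = 0) \<and>
               (\<forall>k. 0 < k \<and> k \<le> Smax w \<longrightarrow>
                  (\<forall>n. sigma k w \<le> n \<and> n < sigma (k - 1) w \<longrightarrow>
                     logN N (real_of_int k) - logN N (real_of_int (w n)) \<le> \<epsilon>))})
          \<longlonglongrightarrow> 1)"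
proof -
  have sp: "\<And>p k. space (rw_law p k) = space (PiM UNIV (\<lambda>_. count_space (UNIV::int set)))"
    by (simp add: rw_law_def)
  have spU: "space (PiM UNIV (\<lambda>_. count_space (UNIV::int set))) = UNIV" by (simp add: space_PiM)
  show ?thesis
  proof
    show "(\<lambda>N. measure (rw_law (p0N a \<phi> N) (kN N))
            {w \<in> space (rw_law (p0N a \<phi> N) (kN N)).
               (\<exists>n. w n = 0) \<and>
               (\<forall>n < sigma (Smax w) w.
                  logN N (real_of_int (Smax w)) - logN N (real_of_int (w n)) \<le> \<epsilon>)})
          \<longlonglongrightarrow> 1"
    proof (rule final_generic[OF assms])
      fix N
      show "{w \<in> space (rw_law (p0N a \<phi> N) (kN N)).
               (\<exists>n. w n = 0) \<and>
               (\<forall>n < sigma (Smax w) w.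
                  logN N (real_of_int (Smax w)) - logN N (real_of_int (w n)) \<le> \<epsilon>)}
            \<in> sets (PiM UNIV (\<lambda>_. count_space (UNIV::int set)))"
        using G1_sets[of N \<epsilon>] unfolding sp Phi1_def .
    next
      fix N and w :: "nat \<Rightarrow> int"
      assume h: "2 \<le> N" "steps w" "1 \<le> w 0" "(\<exists>n. w n = 0)"
        "w \<notin> {w \<in> space (rw_law (p0N a \<phi> N) (kN N)).
               (\<exists>n. w n = 0) \<and>
               (\<forall>n < sigma (Smax w) w.
                  logN N (real_of_int (Smax w)) - logN N (real_of_int (w n)) \<le> \<epsilon>)}"
      then have "\<not> (\<forall>n < sigma (Smax w) w.
                  logN N (real_of_int (Smax w)) - logN N (real_of_int (w n)) \<le> \<epsilon>)"
        unfolding sp spU by simp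
      then show "DB (real N powr \<epsilon>) w" using h by (intro bad1) auto
    qed
  next
    show "(\<lambda>N. measure (rw_law (p0N a \<phi> N) (kN N))
            {w \<in> space (rw_law (p0N a \<phi> N) (kN N)).
               (\<exists>n. w n = 0) \<and>
               (\<forall>k. 0 < k \<and> k \<le> Smax w \<longrightarrow>
                  (\<forall>n. sigma k w \<le> n \<and> n < sigma (k - 1) w \<longrightarrow>
                     logN N (real_of_int k) - logN N (real_of_int (w n)) \<le> \<epsilon>))})
          \<longlonglongrightarrow> 1"
    proof (rule final_generic[OF assms])
      fix N
      show "{w \<in> space (rw_law (p0N a \<phi> N) (kN N)).
               (\<exists>n. w n = 0) \<and>
               (\<forall>k. 0 < k \<and> k \<le> Smax w \<longrightarrow>
                  (\<forall>n. sigma k w \<le> n \<and> n < sigma (k - 1) w \<longrightarrow>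
                     logN N (real_of_int k) - logN N (real_of_int (w n)) \<le> \<epsilon>))}
            \<in> sets (PiM UNIV (\<lambda>_. count_space (UNIV::int set)))"
        using G2_sets[of N \<epsilon>] unfolding sp Phi2_def .
    next
      fix N and w :: "nat \<Rightarrow> int"
      assume h: "2 \<le> N" "steps w" "1 \<le> w 0" "(\<exists>n. w n = 0)"
        "w \<notin> {w \<in> space (rw_law (p0N a \<phi> N) (kN N)).
               (\<exists>n. w n = 0) \<and>
               (\<forall>k. 0 < k \<and> k \<le> Smax w \<longrightarrow>
                  (\<forall>n. sigma k w \<le> n \<and> n < sigma (k - 1) w \<longrightarrow>
                     logN N (real_of_int k) - logN N (real_of_int (w n)) \<le> \<epsilon>))}"
      then have "\<not> (\<forall>k. 0 < k \<and> k \<le> Smax w \<longrightarrow>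
                  (\<forall>n. sigma k w \<le> n \<and> n < sigma (k - 1) w \<longrightarrow>
                     logN N (real_of_int k) - logN N (real_of_int (w n)) \<le> \<epsilon>))"
        unfolding sp spU by simp
      then show "DB (real N powr \<epsilon>) w" using h by (intro bad2) auto
    qed
  qed
qed

end
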